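(* Let $a,b$ be positive integers, and let $m,n$ be coprime positive integers with $\dfrac{\sigma(a)}{\sigma(b)}=\dfrac{m}{n}$. Let $x$ be a positive integer such that $p=nx-1$ and $q=mx-1$ are primes, and let $z$ be a positive integer such that $z,a,p$ are pairwise coprime and $z,b,q$ are pairwise coprime. Then: (i) $zap$ and $zbq$ are amicable if and only if $$\frac{z}{\sigma(z)}=\frac{nx\,\sigma(a)}{(na+mb)x-a-b}.$$ (ii) If $zap$ and $zbq$ are amicable and the fraction $\dfrac{nx\,\sigma(a)}{(na+mb)x-a-b}$ is written in lowest terms as $\dfrac{r}{s}$, then $z$ is deficient ($\sigma(z)<2z$), $r$ divides $z$, $s\ge\sigma(r)$, if $s=\sigma(r)$ then $z=r$, and $r$ is deficient ($\sigma(r)<2r$).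
   Context: For a positive integer $N$, $\sigma(N)$ denotes the sum of all positive divisors of $N$. Positive integers $M,N$ are amicable if $\sigma(M)-M=N$ and $\sigma(N)-N=M$ (equivalently $\sigma(M)=\sigma(N)=M+N$). A positive integer $N$ is deficient if $\sigma(N)<2N$. *)

theory Defs
  imports Complex_Main "HOL-Computational_Algebra.Primes"
begin

definition sigma :: "nat \<Rightarrow> nat" where
  "sigma N = (\<Sum>d \<in> {d. d dvd N}. d)"

definition amicable :: "nat \<Rightarrow> nat \<Rightarrow> bool" where
  "amicable M N \<longleftrightarrow> M > 0 \<and> N > 0 \<and> sigma M - M = N \<and> sigma N - N = M"

definition deficient :: "nat \<Rightarrow> bool" where
  "deficient N \<longleftrightarrow> N > 0 \<and> sigma N < 2 * N"

end

theory Submission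
  imports Defs
begin

lemma dvd_set_fin: "(N::nat) > 0 \<Longrightarrow> finite {d. d dvd N}"
  by (simp add: finite_divisors_nat)

lemma sigma_mult:
  fixes a b :: nat
  assumes "coprime a b" "a > 0" "b > 0"
  shows "sigma (a*b) = sigma a * sigma b"
proof -
  have eq: "{d. d dvd a*b} = (\<lambda>(x,y). x*y) ` ({d. d dvd a} \<times> {d. d dvd b})"
  proof (rule set_eqI, rule iffI)
    fix d assume "d \<in> {d. d dvd a*b}"
    then obtain x y where "d = x*y" "x dvd a" "y dvd b" using division_decomp by blast
    then show "d \<in> (\<lambda>(x,y). x*y) ` ({d. d dvd a} \<times> {d. d dvd b})" by force
  next
    fix d assume "d \<in> (\<lambda>(x,y). x*y) ` ({d. d dvd a} \<times> {d. d dvd b})"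
    then show "d \<in> {d. d dvd a*b}" by (auto intro: mult_dvd_mono)
  qed
  have inj: "inj_on (\<lambda>(x,y). x*y) ({d. d dvd a} \<times> {d. d dvd b})"
  proof (rule inj_onI, clarify)
    fix x1 y1 x2 y2 :: nat
    assume h: "x1 dvd a" "y1 dvd b" "x2 dvd a" "y2 dvd b" "x1*y1 = x2*y2"
    have c1: "coprime x1 y2" using assms(1) h(1,4) coprime_imp_coprime by (meson coprime_divisors)
    have c2: "coprime x2 y1" using assms(1) h(2,3) by (meson coprime_divisors)
    have "x1 dvd x2*y2" using h(5) by (metis dvd_triv_left)
    then have d1: "x1 dvd x2" using c1 by (simp add: coprime_dvd_mult_left_iff)
    have "x2 dvd x1*y1" using h(5) by (metis dvd_triv_left)
    then have d2: "x2 dvd x1" using c2 by (simp add: coprime_dvd_mult_left_iff)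
    have "x1 = x2" using d1 d2 by (simp add: dvd_antisym)
    moreover have "x1 > 0" using h(1) assms(2) by (metis dvd_0_left_iff gr0I)
    ultimately show "x1 = x2 \<and> y1 = y2" using h(5) by simp
  qed
  have "sigma (a*b) = (\<Sum>d\<in>(\<lambda>(x,y). x*y) ` ({d. d dvd a} \<times> {d. d dvd b}). d)"
    unfolding sigma_def eq ..
  also have "\<dots> = (\<Sum>(x,y)\<in>{d. d dvd a} \<times> {d. d dvd b}. x*y)"
    by (subst sum.reindex[OF inj]) (simp add: case_prod_beta)
  also have "\<dots> = sigma a * sigma b"
    unfolding sigma_def by (simp add: sum_product sum.cartesian_product)
  finally show ?thesis .
qed

lemma sigma_prime: "prime (p::nat) \<Longrightarrow> sigma p = p + 1"
proof -
  assume "prime p"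
  then have "{d. d dvd p} = {1, p}" using prime_nat_iff by auto
  moreover have "p \<noteq> 1" using \<open>prime p\<close> by auto
  ultimately show ?thesis unfolding sigma_def by simp
qed

lemma sigma_ge: "(N::nat) > 0 \<Longrightarrow> sigma N \<ge> N"
  unfolding sigma_def by (rule member_le_sum) (auto simp: finite_divisors_nat)

lemma sigma_div:
  fixes r k :: nat
  assumes "r > 0" "k > 0"
  shows "sigma (r*k) \<ge> k * sigma r + (if k > 1 then 1 else 0)"
proof -
  define S where "S = (\<lambda>d. d*k) ` {d. d dvd r}"
  have fin: "finite {d. d dvd r*k}" using assms by (simp add: finite_divisors_nat)
  have inj: "inj_on (\<lambda>d. d*k) {d. d dvd r}"
  proof (rule inj_onI)
    fix u v assume "u \<in> {d. d dvd r}" "v \<in> {d. d dvd r}" "u * k = v * k"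
    then show "u = v" using assms(2) by simp
  qed
  have sub: "S \<subseteq> {d. d dvd r*k}" unfolding S_def by auto
  have finS: "finite S" using fin sub finite_subset by blast
  have "(\<Sum>d\<in>S. d) = (\<Sum>d\<in>{d. d dvd r}. d*k)"
    unfolding S_def by (subst sum.reindex[OF inj]) simp
  also have "\<dots> = sigma r * k" unfolding sigma_def by (rule sum_distrib_right[symmetric])
  finally have kS: "(\<Sum>d\<in>S. d) = k * sigma r" by simp
  show ?thesis
  proof (cases "k > 1")
    case True
    have n1: "1 \<notin> S"
    proof
      assume "1 \<in> S"
      then obtain d where "1 = d*k" unfolding S_def by blast
      then have "k dvd 1" by (metis dvd_triv_right)
      then show False using True by simp
    qed
    have sub2: "insert 1 S \<subseteq> {d. d dvd r*k}" using sub by auto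
    have "(\<Sum>d\<in>insert 1 S. d) \<le> sigma (r*k)"
      unfolding sigma_def by (rule sum_mono2[OF fin sub2]) auto
    moreover have "(\<Sum>d\<in>insert 1 S. d) = 1 + (\<Sum>d\<in>S. d)" by (rule sum.insert[OF finS n1])
    ultimately show ?thesis using True kS by simp
  next
    case False
    have "(\<Sum>d\<in>S. d) \<le> sigma (r*k)"
      unfolding sigma_def by (rule sum_mono2[OF fin sub]) auto
    then show ?thesis using False kS by simp
  qed
qed

lemma amic_iff: "sigma M = S \<Longrightarrow> sigma N = S \<Longrightarrow> M > 0 \<Longrightarrow> N > 0 \<Longrightarrow> amicable M N \<longleftrightarrow> S = M + N"
  unfolding amicable_def by auto

theorem mainTheorem11:
  fixes a b m n x z p q :: nat
  assumes "a > 0" "b > 0" "m > 0" "n > 0" "coprime m n"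
    and "(of_nat (sigma a) / of_nat (sigma b) :: rat) = of_nat m / of_nat n"
    and "x > 0" "p = n * x - 1" "q = m * x - 1" "prime p" "prime q"
    and "z > 0"
    and "coprime z a" "coprime z p" "coprime a p"
    and "coprime z b" "coprime z q" "coprime b q"
  shows "(amicable (z * a * p) (z * b * q) \<longleftrightarrow>
            (of_nat z / of_nat (sigma z) :: rat) =
              of_int (int n * int x * int (sigma a)) /
              of_int ((int n * int a + int m * int b) * int x - int a - int b)) \<and>
         (amicable (z * a * p) (z * b * q) \<longrightarrow>
         (\<forall>r s :: nat. s > 0 \<and> coprime r s \<and>
            (of_nat r / of_nat s :: rat) =
              of_int (int n * int x * int (sigma a)) /
              of_int ((int n * int a + int m * int b) * int x - int a - int b)
          \<longrightarrow> deficient z \<and> r dvd z \<and> s \<ge> sigma r \<and> (s = sigma r \<longrightarrow> z = r) \<and> deficient r))"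
proof -
  define A where "A = sigma a"
  define B where "B = sigma b"
  define Z where "Z = sigma z"
  have Apos: "A > 0" using sigma_ge[OF assms(1)] assms(1) unfolding A_def by linarith
  have Bpos: "B > 0" using sigma_ge[OF assms(2)] assms(2) unfolding B_def by linarith
  have Zpos: "Z > 0" using sigma_ge[OF assms(12)] assms(12) unfolding Z_def by linarith
  have Aa: "A \<ge> a" using sigma_ge[OF assms(1)] unfolding A_def .
  have Bb: "B \<ge> b" using sigma_ge[OF assms(2)] unfolding B_def .
  have "(of_nat A :: rat) * of_nat n = of_nat m * of_nat B"
    using assms(6) Bpos assms(4) unfolding A_def B_def by (simp add: frac_eq_eq)
  then have "(of_nat (A*n) :: rat) = of_nat (B*m)" by (simp add: mult.commute)
  then have hAB: "A * n = B * m" by (simp only: of_nat_eq_iff)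
  have p2: "p \<ge> 2" using assms(10) prime_ge_2_nat by blast
  have q2: "q \<ge> 2" using assms(11) prime_ge_2_nat by blast
  have pn: "p + 1 = n * x" using assms(8) p2 by simp
  have qm: "q + 1 = m * x" using assms(9) q2 by simp
  have S1: "sigma (z*a*p) = Z * A * (n*x)"
  proof -
    have "coprime (z*a) p" using assms(14,15) by simp
    moreover have "z*a > 0" using assms(1,12) by simp
    moreover have "p > 0" using p2 by simp
    ultimately have "sigma (z*a*p) = sigma (z*a) * sigma p" by (rule sigma_mult)
    also have "\<dots> = Z * A * (n*x)" unfolding sigma_mult[OF assms(13) assms(12) assms(1)]
      sigma_prime[OF assms(10)] pn Z_def A_def ..
    finally show ?thesis .
  qed
  have S2: "sigma (z*b*q) = Z * B * (m*x)"
  proof -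
    have "coprime (z*b) q" using assms(17,18) by simp
    moreover have "z*b > 0" using assms(2,12) by simp
    moreover have "q > 0" using q2 by simp
    ultimately have "sigma (z*b*q) = sigma (z*b) * sigma q" by (rule sigma_mult)
    also have "\<dots> = Z * B * (m*x)" unfolding sigma_mult[OF assms(16) assms(12) assms(2)]
      sigma_prime[OF assms(11)] qm Z_def B_def ..
    finally show ?thesis .
  qed
  have S12: "Z * A * (n*x) = Z * B * (m*x)"
  proof -
    have "Z * A * (n*x) = Z * (A*n) * x" by (simp only: mult.assoc)
    also have "\<dots> = Z * (B*m) * x" unfolding hAB ..
    also have "\<dots> = Z * B * (m*x)" by (simp only: mult.assoc)
    finally show ?thesis .
  qed
  have Mpos: "z*a*p > 0" using assms p2 by simp
  have Npos: "z*b*q > 0" using assms q2 by simp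
  have amic: "amicable (z*a*p) (z*b*q) \<longleftrightarrow> Z * A * (n*x) = z*a*p + z*b*q"
    using amic_iff[OF S1 _ Mpos Npos] S2 S12 by argo
  define D where "D = (int n * int a + int m * int b) * int x - int a - int b"
  define X where "X = int n * int x * int (sigma a)"
  have MN: "int (z*a*p + z*b*q) = int z * D"
  proof -
    have hp: "int p = int n * int x - 1" using arg_cong[OF pn, of int] by simp
    have hq: "int q = int m * int x - 1" using arg_cong[OF qm, of int] by simp
    have "int (z*a*p + z*b*q) = int z * (int a * int p + int b * int q)" by (simp add: algebra_simps)
    also have "\<dots> = int z * D" unfolding D_def hp hq by (simp add: algebra_simps)
    finally show ?thesis .
  qed
  have "0 < z*a*p + z*b*q" using Mpos by (rule add_pos_nonneg) simp
  then have "0 < int (z*a*p + z*b*q)" by (simp only: of_nat_0_less_iff)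
  then have "0 < int z * D" unfolding MN .
  then have Dpos: "D > 0" using assms(12) by (simp add: zero_less_mult_iff)
  have XZ: "int (Z * A * (n*x)) = X * int Z" unfolding X_def A_def by simp
  have rhs: "(of_nat z / of_nat (sigma z) :: rat) = of_int X / of_int D \<longleftrightarrow> int z * D = X * int Z"
  proof -
    have "(of_nat z / of_nat (sigma z) :: rat) = of_int X / of_int D \<longleftrightarrow>
          (of_int (int z) :: rat) * of_int D = of_int X * of_int (int Z)"
      using Zpos Dpos unfolding Z_def by (simp add: frac_eq_eq)
    also have "\<dots> \<longleftrightarrow> (of_int (int z * D) :: rat) = of_int (X * int Z)" by (simp only: of_int_mult)
    also have "\<dots> \<longleftrightarrow> int z * D = X * int Z" by (rule of_int_eq_iff)
    finally show ?thesis .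
  qed
  have partI: "amicable (z*a*p) (z*b*q) \<longleftrightarrow> (of_nat z / of_nat (sigma z) :: rat) = of_int X / of_int D"
  proof -
    have "Z*A*(n*x) = z*a*p + z*b*q \<longleftrightarrow> int (Z*A*(n*x)) = int (z*a*p + z*b*q)" by (rule of_nat_eq_iff[symmetric])
    also have "\<dots> \<longleftrightarrow> X * int Z = int z * D" unfolding MN XZ ..
    also have "\<dots> \<longleftrightarrow> int z * D = X * int Z" by (rule eq_commute)
    finally show ?thesis unfolding amic rhs .
  qed
  have partII: "deficient z \<and> r dvd z \<and> s \<ge> sigma r \<and> (s = sigma r \<longrightarrow> z = r) \<and> deficient r"
    if am: "amicable (z*a*p) (z*b*q)" and rs: "s > 0" "coprime r s"
      "(of_nat r / of_nat s :: rat) = of_int X / of_int D" for r s :: nat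
  proof -
    have eqS: "Z * A * (n*x) = z*a*p + z*b*q" using am amic by simp
    have "(of_nat z / of_nat Z :: rat) = of_int X / of_int D" using partI am unfolding Z_def by blast
    then have "(of_nat r / of_nat s :: rat) = of_nat z / of_nat Z" by (rule trans[OF rs(3) sym])
    then have "(of_nat r :: rat) * of_nat Z = of_nat z * of_nat s" using rs(1) Zpos by (simp add: frac_eq_eq)
    then have "(of_nat (r * Z) :: rat) = of_nat (z * s)" by (simp only: of_nat_mult)
    then have rZ: "r * Z = z * s" by (simp only: of_nat_eq_iff)
    have rpos: "r > 0"
    proof (rule ccontr)
      assume "\<not> r > 0"
      then have "r = 0" by simp
      then have "z * s = 0" using rZ by simp
      then show False using rs(1) assms(12) by simp
    qed
    have "r dvd z * s" unfolding rZ[symmetric] by simp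
    then have rdz: "r dvd z" using rs(2) by (simp add: coprime_dvd_mult_left_iff)
    then obtain k where zk: "z = r * k" by blast
    have kpos: "k > 0" using zk assms(12) by (simp add: gr0I)
    have Zsk: "Z = s * k" using rZ zk rpos by (simp add: mult.commute mult.left_commute)
    have T: "a*p + b*q < 2 * (A*(n*x))"
    proof -
      have "a*p \<le> A*p" using Aa by (rule mult_le_mono1)
      moreover have "A*p < A*(p+1)" using Apos by simp
      ultimately have "a*p < A*(p+1)" by linarith
      then have t1: "a*p < A*(n*x)" unfolding pn .
      have "b*q \<le> B*q" using Bb by (rule mult_le_mono1)
      moreover have "B*q < B*(q+1)" using Bpos by simp
      ultimately have "b*q < B*(q+1)" by linarith
      also have "B*(q+1) = B*(m*x)" unfolding qm ..
      also have "B*(m*x) = A*(n*x)" using hAB by (simp add: mult.assoc[symmetric])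
      finally show ?thesis using t1 by simp
    qed
    have "Z * (A*(n*x)) < (2*z) * (A*(n*x))"
    proof -
      have "Z * (A*(n*x)) = z * (a*p + b*q)" using eqS by (simp add: algebra_simps)
      also have "\<dots> < z * (2 * (A*(n*x)))" using T assms(12) by simp
      finally show ?thesis by (simp add: algebra_simps)
    qed
    then have Zlt: "Z < 2*z" by simp
    have sd: "sigma (r*k) \<ge> k * sigma r + (if k > 1 then 1 else 0)" using sigma_div rpos kpos by blast
    have sd1: "k * sigma r \<le> sigma (r*k)" using sd by (cases "k > 1") auto
    have Zrk: "sigma (r*k) = k * s" using Zsk zk unfolding Z_def by (simp add: mult.commute)
    have ks: "k * sigma r \<le> k * s" using sd1 unfolding Zrk .
    then have sge: "s \<ge> sigma r" using kpos by simp
    have seq: "z = r" if "s = sigma r"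
    proof (rule ccontr)
      assume "z \<noteq> r"
      then have "k \<noteq> 1" using zk by auto
      then have "k > 1" using kpos by linarith
      then have "k * sigma r + 1 \<le> sigma (r*k)" using sd by simp
      then show False unfolding Zrk that by simp
    qed
    have "Z < 2*(r*k)" using Zlt zk by simp
    then have "k * s < k * (2*r)" using Zsk by (simp add: algebra_simps)
    then have "k * sigma r < k * (2*r)" using ks by linarith
    then have "sigma r < 2*r" by simp
    then show ?thesis using Zlt rdz sge seq rpos assms(12) unfolding deficient_def Z_def by simp
  qed
  show ?thesis using partI partII unfolding X_def D_def by blast
qed

end
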